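(* Let $X=X_1\times X_2$ be as in the context. For $j=1,2$ let $-\mathbf{A}_j:\mathrm{dom}(\mathbf{A}_j)\subset X_j\to X_j$ be generators of holomorphic contraction semigroups, and let $\mathbf{B}_1:X_2\to X_1$, $\mathbf{B}_2:X_1\to X_2$ be bounded. Let $M_A>0$ be a constant with $\|t\mathbf{A}_i\mathrm{e}^{-t\mathbf{A}_i}\|\le M_A$ for all $t>0$ and $i=1,2$. Then there is a constant $C_1=C_1(\|\mathbf{B}_1\|,\|\mathbf{B}_2\|)>0$ such that for all $t>0$, $n\in\mathbb{N}$, $k\in\{1,\dots,n\}$ and $\tau=t/n$ we have \[ \|\mathcal{A}\mathcal{T}(\tau)^k\|\le C_1\,\mathrm{e}^{t(\|\mathbf{B}_1\|+\|\mathbf{B}_2\|)}\,(1+\log k)+\frac{M_A}{k\tau}. \]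
   Context: $X=X_1\times X_2$ for Banach spaces $X_1,X_2$, with norm $\|(x,y)\|^2=\|x\|_{X_1}^2+\|y\|_{X_2}^2$. A holomorphic (bounded) semigroup $\mathrm{e}^{-t\mathbf{A}}$ is one with $\mathrm{e}^{-t\mathbf{A}}x\in\mathrm{dom}(\mathbf{A})$ for all $x$, $t>0$ and $\sup_{t>0}\|t\mathbf{A}\mathrm{e}^{-t\mathbf{A}}\|<\infty$. For $\tau\ge0$ set $\mathbf{E}_j(\tau)=\mathrm{e}^{-\tau\mathbf{A}_j}$ and $\mathbf{X}_j(\tau)=\int_0^\tau \mathrm{e}^{-\sigma\mathbf{A}_j}\,\mathrm{d}\sigma\,\mathbf{B}_j$ (strong integral). The split-step operator on $X$ is \[ \mathcal{T}(\tau)=\begin{pmatrix}\mathbf{E}_1(\tau) & \mathbf{X}_1(\tau)\\ \mathbf{X}_2(\tau)\mathbf{E}_1(\tau) & \mathbf{X}_2(\tau)\mathbf{X}_1(\tau)+\mathbf{E}_2(\tau)\end{pmatrix}. \] $\mathcal{A}=\mathrm{diag}(\mathbf{A}_1,\mathbf{A}_2)$ on $\mathrm{dom}(\mathcal{A})=\mathrm{dom}(\mathbf{A}_1)\times\mathrm{dom}(\mathbf{A}_2)$. *)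

theory Defs
  imports "HOL-Analysis.Analysis"
begin

definition c0_semigroup :: "(real \<Rightarrow> 'a::banach \<Rightarrow>\<^sub>L 'a) \<Rightarrow> bool" where
  "c0_semigroup S \<longleftrightarrow>
     S 0 = id_blinfun \<and>
     (\<forall>s t. 0 \<le> s \<longrightarrow> 0 \<le> t \<longrightarrow> S (s + t) = S s o\<^sub>L S t) \<and>
     (\<forall>x. ((\<lambda>t. blinfun_apply (S t) x) \<longlongrightarrow> x) (at_right 0))"

definition is_generator :: "(real \<Rightarrow> 'a::banach \<Rightarrow>\<^sub>L 'a) \<Rightarrow> 'a set \<Rightarrow> ('a \<Rightarrow> 'a) \<Rightarrow> bool" where
  "is_generator S D G \<longleftrightarrow>
     D = {x. \<exists>y. ((\<lambda>h. (blinfun_apply (S h) x - x) /\<^sub>R h) \<longlongrightarrow> y) (at_right 0)} \<and>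
     (\<forall>x\<in>D. ((\<lambda>h. (blinfun_apply (S h) x - x) /\<^sub>R h) \<longlongrightarrow> G x) (at_right 0))"

definition holo_contraction_sg :: "(real \<Rightarrow> 'a::banach \<Rightarrow>\<^sub>L 'a) \<Rightarrow> 'a set \<Rightarrow> ('a \<Rightarrow> 'a) \<Rightarrow> bool" where
  "holo_contraction_sg S D A \<longleftrightarrow>
     c0_semigroup S \<and>
     (\<forall>t\<ge>0. norm (S t) \<le> 1) \<and>
     is_generator S D (\<lambda>x. - A x) \<and>
     (\<forall>t>0. \<forall>x. blinfun_apply (S t) x \<in> D) \<and>
     (\<exists>M. \<forall>t>0. \<forall>x. norm (t *\<^sub>R A (blinfun_apply (S t) x)) \<le> M * norm x)"

definition Xop :: "(real \<Rightarrow> 'a::banach \<Rightarrow>\<^sub>L 'a) \<Rightarrow> ('b::banach \<Rightarrow>\<^sub>L 'a) \<Rightarrow> real \<Rightarrow> 'b \<Rightarrow> 'a" where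
  "Xop S B \<tau> y = integral {0..\<tau>} (\<lambda>\<sigma>. blinfun_apply (S \<sigma>) (blinfun_apply B y))"

text \<open>Split-step operator on X_1 \<times> X_2 (product norm is the l2 norm sqrt(|x|^2+|y|^2)).\<close>
definition splitT :: "(real \<Rightarrow> 'a::banach \<Rightarrow>\<^sub>L 'a) \<Rightarrow> (real \<Rightarrow> 'b::banach \<Rightarrow>\<^sub>L 'b)
    \<Rightarrow> ('b \<Rightarrow>\<^sub>L 'a) \<Rightarrow> ('a \<Rightarrow>\<^sub>L 'b) \<Rightarrow> real \<Rightarrow> 'a \<times> 'b \<Rightarrow> 'a \<times> 'b" where
  "splitT S1 S2 B1 B2 \<tau> z =
     (let x = fst z; y = snd z;
          e1x = blinfun_apply (S1 \<tau>) x
      in (e1x + Xop S1 B1 \<tau> y,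
          Xop S2 B2 \<tau> e1x + Xop S2 B2 \<tau> (Xop S1 B1 \<tau> y) + blinfun_apply (S2 \<tau>) y))"

definition diagA :: "('a \<Rightarrow> 'a) \<Rightarrow> ('b \<Rightarrow> 'b) \<Rightarrow> 'a \<times> 'b \<Rightarrow> 'a \<times> 'b" where
  "diagA A1 A2 z = (A1 (fst z), A2 (snd z))"

end

theory Submission
  imports Defs
begin


lemma sg_props:
  assumes "holo_contraction_sg S D A"
  shows "S 0 = id_blinfun" "\<And>s t. 0 \<le> s \<Longrightarrow> 0 \<le> t \<Longrightarrow> S (s + t) = S s o\<^sub>L S t"
    "\<And>x. ((\<lambda>t. blinfun_apply (S t) x) \<longlongrightarrow> x) (at_right 0)"
    "\<And>t. 0 \<le> t \<Longrightarrow> norm (S t) \<le> 1"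
    "D = {x. \<exists>y. ((\<lambda>h. (blinfun_apply (S h) x - x) /\<^sub>R h) \<longlongrightarrow> y) (at_right 0)}"
    "\<And>x. x \<in> D \<Longrightarrow> ((\<lambda>h. (blinfun_apply (S h) x - x) /\<^sub>R h) \<longlongrightarrow> - A x) (at_right 0)"
    "\<And>t x. 0 < t \<Longrightarrow> blinfun_apply (S t) x \<in> D"
  using assms unfolding holo_contraction_sg_def c0_semigroup_def is_generator_def by auto

lemma sg_gen_eq:
  assumes "holo_contraction_sg S D A"
    and "((\<lambda>h. (blinfun_apply (S h) x - x) /\<^sub>R h) \<longlongrightarrow> y) (at_right 0)"
  shows "x \<in> D \<and> A x = - y"
proof -
  have xD: "x \<in> D" using assms(2) sg_props(5)[OF assms(1)] by blast
  have "((\<lambda>h. (blinfun_apply (S h) x - x) /\<^sub>R h) \<longlongrightarrow> - A x) (at_right 0)"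
    using sg_props(6)[OF assms(1) xD] .
  then have "- A x = y" using assms(2) tendsto_unique[OF trivial_limit_at_right_real] by blast
  then show ?thesis using xD by auto
qed

lemma sg_add:
  assumes "holo_contraction_sg S D A" "x \<in> D" "y \<in> D"
  shows "x + y \<in> D \<and> A (x + y) = A x + A y"
proof -
  have "((\<lambda>h. (blinfun_apply (S h) x - x) /\<^sub>R h + (blinfun_apply (S h) y - y) /\<^sub>R h) \<longlongrightarrow> - A x + - A y) (at_right 0)"
    by (intro tendsto_add sg_props(6)[OF assms(1)] assms(2,3))
  moreover have "\<And>h. (blinfun_apply (S h) x - x) /\<^sub>R h + (blinfun_apply (S h) y - y) /\<^sub>R h
      = (blinfun_apply (S h) (x + y) - (x + y)) /\<^sub>R h"
    by (simp add: blinfun.add_right algebra_simps scaleR_diff_right)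
  ultimately have "((\<lambda>h. (blinfun_apply (S h) (x + y) - (x + y)) /\<^sub>R h) \<longlongrightarrow> - A x + - A y) (at_right 0)"
    by simp
  from sg_gen_eq[OF assms(1) this] show ?thesis by simp
qed

lemma sg_zero:
  assumes "holo_contraction_sg S D A"
  shows "0 \<in> D \<and> A 0 = 0"
proof -
  have "((\<lambda>h. (blinfun_apply (S h) 0 - 0) /\<^sub>R h) \<longlongrightarrow> 0) (at_right 0)" by simp
  from sg_gen_eq[OF assms(1) this] show ?thesis by simp
qed

lemma sg_sum:
  assumes "holo_contraction_sg S D A" "\<And>j. j \<in> J \<Longrightarrow> f j \<in> D" "finite J"
  shows "sum f J \<in> D \<and> A (sum f J) = (\<Sum>j\<in>J. A (f j))"
  using assms(3,2)
proof (induction J rule: finite_induct)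
  case empty
  then show ?case using sg_zero[OF assms(1)] by simp
next
  case (insert a F)
  then show ?case using sg_add[OF assms(1), of "f a" "sum f F"] by simp
qed

lemma sg_key:
  assumes "holo_contraction_sg S D A" "0 \<le> s" "0 \<le> r"
  shows "norm (blinfun_apply (S (s + r)) v - blinfun_apply (S s) v) \<le> norm (blinfun_apply (S r) v - v)"
proof -
  have "blinfun_apply (S (s + r)) v - blinfun_apply (S s) v = blinfun_apply (S s) (blinfun_apply (S r) v - v)"
    using sg_props(2)[OF assms(1,2,3)] by (simp add: blinfun.diff_right)
  also have "norm \<dots> \<le> norm (S s) * norm (blinfun_apply (S r) v - v)" by (rule norm_blinfun)
  also have "\<dots> \<le> norm (blinfun_apply (S r) v - v)"
    using sg_props(4)[OF assms(1,2)] by (simp add: mult_left_le_one_le)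
  finally show ?thesis .
qed

lemma sg_cont:
  assumes "holo_contraction_sg S D A"
  shows "continuous_on {0..} (\<lambda>\<sigma>. blinfun_apply (S \<sigma>) v)"
  unfolding continuous_on_iff
proof (intro ballI allI impI)
  fix t e :: real assume t: "t \<in> {0..}" and e: "0 < e"
  have "eventually (\<lambda>h. dist (blinfun_apply (S h) v) v < e) (at_right 0)"
    using sg_props(3)[OF assms(1), of v] e tendstoD by blast
  then obtain b where b: "b > 0" "\<And>h. h > 0 \<Longrightarrow> h < b \<Longrightarrow> dist (blinfun_apply (S h) v) v < e"
    unfolding eventually_at_right_field by auto
  show "\<exists>d>0. \<forall>x'\<in>{0..}. dist x' t < d \<longrightarrow> dist (blinfun_apply (S x') v) (blinfun_apply (S t) v) < e"
  proof (intro exI[of _ b] conjI ballI impI)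
    fix x' :: real assume x': "x' \<in> {0..}" "dist x' t < b"
    consider "x' = t" | "x' > t" | "x' < t" by linarith
    then show "dist (blinfun_apply (S x') v) (blinfun_apply (S t) v) < e"
    proof cases
      case 1 then show ?thesis using e by simp
    next
      case 2
      have "norm (blinfun_apply (S (t + (x' - t))) v - blinfun_apply (S t) v) \<le> norm (blinfun_apply (S (x' - t)) v - v)"
        using sg_key[OF assms(1), of t "x' - t" v] t 2 by simp
      moreover have "dist (blinfun_apply (S (x' - t)) v) v < e" using b(2)[of "x' - t"] 2 x' by (simp add: dist_real_def)
      ultimately show ?thesis by (simp add: dist_norm)
    next
      case 3
      have "norm (blinfun_apply (S (x' + (t - x'))) v - blinfun_apply (S x') v) \<le> norm (blinfun_apply (S (t - x')) v - v)"
        using sg_key[OF assms(1), of x' "t - x'" v] x' 3 by simp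
      moreover have "dist (blinfun_apply (S (t - x')) v) v < e" using b(2)[of "t - x'"] 3 x' by (simp add: dist_real_def)
      ultimately show ?thesis by (simp add: dist_norm norm_minus_commute)
    qed
  qed (use b in auto)
qed

lemma cont_quot:
  fixes f :: "real \<Rightarrow> 'a::banach"
  assumes fc: "continuous_on {0..} f" and t0: "0 \<le> \<tau>"
  shows "((\<lambda>h. (integral {0..\<tau>+h} f - integral {0..\<tau>} f) /\<^sub>R h) \<longlongrightarrow> f \<tau>) (at_right 0)"
  unfolding tendsto_iff
proof (intro allI impI)
  fix e :: real assume e: "0 < e"
  obtain d where d: "d > 0" "\<And>\<sigma>. \<sigma> \<in> {0..} \<Longrightarrow> dist \<sigma> \<tau> < d \<Longrightarrow> dist (f \<sigma>) (f \<tau>) < e/2"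
    using fc t0 e unfolding continuous_on_iff by (meson atLeast_iff half_gt_zero)
  show "\<forall>\<^sub>F h in at_right 0. dist ((integral {0..\<tau>+h} f - integral {0..\<tau>} f) /\<^sub>R h) (f \<tau>) < e"
    unfolding eventually_at_right_field
  proof (intro exI[of _ d] conjI allI impI)
    fix h :: real assume h: "0 < h" "h < d"
    have int: "f integrable_on {0..\<tau>+h}"
      by (rule integrable_continuous_interval, rule continuous_on_subset[OF fc]) auto
    have c1: "integral {0..\<tau>} f + integral {\<tau>..\<tau>+h} f = integral {0..\<tau>+h} f"
      using Henstock_Kurzweil_Integration.integral_combine[OF t0 _ int] h by simp
    have int2: "f integrable_on {\<tau>..\<tau>+h}"
      by (rule integrable_continuous_interval, rule continuous_on_subset[OF fc]) (use t0 in auto)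
    have c2: "integral {\<tau>..\<tau>+h} (\<lambda>\<sigma>. f \<sigma> - f \<tau>) = integral {\<tau>..\<tau>+h} f - h *\<^sub>R f \<tau>"
      using integral_diff[OF int2 integrable_const_ivl[of "f \<tau>"]] h by simp
    have "norm (integral {\<tau>..\<tau>+h} (\<lambda>\<sigma>. f \<sigma> - f \<tau>)) \<le> e/2 * ((\<tau>+h) - \<tau>)"
    proof (rule integral_bound)
      show "continuous_on {\<tau>..\<tau> + h} (\<lambda>\<sigma>. f \<sigma> - f \<tau>)"
        by (intro continuous_intros continuous_on_subset[OF fc]) (use t0 in auto)
      fix s assume "s \<in> {\<tau>..\<tau>+h}"
      then show "norm (f s - f \<tau>) \<le> e / 2" using d(2)[of s] h t0 by (auto simp: dist_norm dist_real_def less_imp_le)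
    qed (use h in auto)
    then have "norm (integral {\<tau>..\<tau>+h} f - h *\<^sub>R f \<tau>) \<le> e/2 * h" using c2 by simp
    moreover have "(integral {0..\<tau>+h} f - integral {0..\<tau>} f) /\<^sub>R h - f \<tau> = (integral {\<tau>..\<tau>+h} f - h *\<^sub>R f \<tau>) /\<^sub>R h"
      using c1[symmetric] h by (simp add: algebra_simps scaleR_diff_right)
    ultimately have "dist ((integral {0..\<tau>+h} f - integral {0..\<tau>} f) /\<^sub>R h) (f \<tau>) = norm (integral {\<tau>..\<tau>+h} f - h *\<^sub>R f \<tau>) / h"
      using h by (simp add: dist_norm) (simp add: field_simps)
    also have "\<dots> \<le> e/2" using \<open>norm (integral {\<tau>..\<tau>+h} f - h *\<^sub>R f \<tau>) \<le> e/2 * h\<close> h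
      by (simp add: divide_le_eq)
    finally have "dist ((integral {0..\<tau>+h} f - integral {0..\<tau>} f) /\<^sub>R h) (f \<tau>) \<le> e/2" .
    then show "dist ((integral {0..\<tau>+h} f - integral {0..\<tau>} f) /\<^sub>R h) (f \<tau>) < e" using e by linarith
  qed (use d in auto)
qed

lemma sg_integrable:
  assumes "holo_contraction_sg S D A" "0 \<le> a"
  shows "(\<lambda>\<sigma>. blinfun_apply (S \<sigma>) v) integrable_on {a..b}"
  by (rule integrable_continuous_interval, rule continuous_on_subset[OF sg_cont[OF assms(1)]]) (use assms(2) in auto)

lemma sg_int:
  assumes H: "holo_contraction_sg S D A" and t0: "0 \<le> \<tau>"
  shows "integral {0..\<tau>} (\<lambda>\<sigma>. blinfun_apply (S \<sigma>) v) \<in> D \<and>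
         A (integral {0..\<tau>} (\<lambda>\<sigma>. blinfun_apply (S \<sigma>) v)) = v - blinfun_apply (S \<tau>) v"
proof -
  define f where "f = (\<lambda>\<sigma>. blinfun_apply (S \<sigma>) v)"
  define F where "F = (\<lambda>s. integral {0..s} f)"
  have fc: "continuous_on {0..} f" unfolding f_def by (rule sg_cont[OF H])
  have q1: "((\<lambda>h. (F (\<tau>+h) - F \<tau>) /\<^sub>R h) \<longlongrightarrow> f \<tau>) (at_right 0)"
    unfolding F_def by (rule cont_quot[OF fc t0])
  have q2: "((\<lambda>h. (F (0+h) - F 0) /\<^sub>R h) \<longlongrightarrow> f 0) (at_right 0)"
    unfolding F_def by (rule cont_quot[OF fc]) simp
  have f0: "f 0 = v" unfolding f_def using sg_props(1)[OF H] by simp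
  have F0: "F 0 = 0" unfolding F_def by simp
  have eq: "(blinfun_apply (S h) (F \<tau>) - F \<tau>) /\<^sub>R h = (F (\<tau>+h) - F \<tau>) /\<^sub>R h - (F (0+h) - F 0) /\<^sub>R h"
    if h: "h > 0" for h
  proof -
    have "blinfun_apply (S h) (F \<tau>) = integral {0..\<tau>} (\<lambda>\<sigma>. blinfun_apply (S h) (f \<sigma>))"
      unfolding F_def f_def by (rule integral_blinfun_apply[symmetric], rule sg_integrable[OF H]) simp
    also have "\<dots> = integral {0..\<tau>} (\<lambda>\<sigma>. f (\<sigma> + h))"
    proof (rule integral_cong)
      fix \<sigma> assume "\<sigma> \<in> {0..\<tau>}"
      then show "blinfun_apply (S h) (f \<sigma>) = f (\<sigma> + h)"
        unfolding f_def using sg_props(2)[OF H, of h \<sigma>] h by (simp add: add.commute)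
    qed
    also have "\<dots> = integral {h..\<tau>+h} f"
      using integral_shift_real_ivl[of "h" h "\<tau>+h" f] by simp
    also have "\<dots> = F (\<tau>+h) - F h"
      unfolding F_def using Henstock_Kurzweil_Integration.integral_combine[of 0 h "\<tau>+h" f] h t0
        sg_integrable[OF H, of 0 v "\<tau>+h"] unfolding f_def by (simp add: algebra_simps)
    finally have "blinfun_apply (S h) (F \<tau>) = F (\<tau>+h) - F h" .
    then have "blinfun_apply (S h) (F \<tau>) - F \<tau> = (F (\<tau>+h) - F \<tau>) - (F (0+h) - F 0)" using F0 by simp
    then show ?thesis by (metis scaleR_diff_right)
  qed
  have "((\<lambda>h. (F (\<tau>+h) - F \<tau>) /\<^sub>R h - (F (0+h) - F 0) /\<^sub>R h) \<longlongrightarrow> f \<tau> - f 0) (at_right 0)"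
    by (intro tendsto_diff q1 q2)
  then have "((\<lambda>h. (blinfun_apply (S h) (F \<tau>) - F \<tau>) /\<^sub>R h) \<longlongrightarrow> f \<tau> - f 0) (at_right 0)"
    by (rule Lim_transform_eventually) (auto simp: eventually_at_right_field eq intro!: exI[of _ 1])
  from sg_gen_eq[OF H this] show ?thesis using f0 unfolding F_def f_def by simp
qed

lemma sg_int_norm:
  assumes H: "holo_contraction_sg S D A" and t0: "0 \<le> \<tau>"
  shows "norm (integral {0..\<tau>} (\<lambda>\<sigma>. blinfun_apply (S \<sigma>) v)) \<le> \<tau> * norm v"
proof -
  have "norm (integral {0..\<tau>} (\<lambda>\<sigma>. blinfun_apply (S \<sigma>) v)) \<le> norm v * (\<tau> - 0)"
  proof (rule integral_bound)
    show "continuous_on {0..\<tau>} (\<lambda>\<sigma>. blinfun_apply (S \<sigma>) v)"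
      by (rule continuous_on_subset[OF sg_cont[OF H]]) auto
    fix s assume s: "s \<in> {0..\<tau>}"
    have "norm (blinfun_apply (S s) v) \<le> norm (S s) * norm v" by (rule norm_blinfun)
    also have "\<dots> \<le> norm v" using sg_props(4)[OF H, of s] s by (simp add: mult_left_le_one_le)
    finally show "norm (blinfun_apply (S s) v) \<le> norm v" .
  qed (use t0 in auto)
  then show ?thesis by (simp add: mult.commute)
qed

lemma sg_int_add:
  assumes H: "holo_contraction_sg S D A" and t0: "0 \<le> \<tau>"
  shows "integral {0..\<tau>} (\<lambda>\<sigma>. blinfun_apply (S \<sigma>) (a + b)) =
    integral {0..\<tau>} (\<lambda>\<sigma>. blinfun_apply (S \<sigma>) a) + integral {0..\<tau>} (\<lambda>\<sigma>. blinfun_apply (S \<sigma>) b)"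
  by (simp add: blinfun.add_right integral_add sg_integrable[OF H])



lemma pair_le:
  assumes "norm a \<le> norm a'" "norm b \<le> norm b'"
  shows "norm (a, b) \<le> norm (a', b')"
  unfolding norm_Pair by (intro real_sqrt_le_mono add_mono power_mono assms) auto

lemma pair_scale:
  assumes "norm a \<le> c * norm x" "norm b \<le> c * norm y" "0 \<le> c"
  shows "norm (a, b) \<le> c * norm (x, y)"
proof -
  have "norm (a, b) \<le> norm (c *\<^sub>R x, c *\<^sub>R y)" by (rule pair_le) (use assms in auto)
  also have "(c *\<^sub>R x, c *\<^sub>R y) = c *\<^sub>R (x, y)" by simp
  also have "norm (c *\<^sub>R (x, y)) = c * norm (x, y)" using assms(3) by (simp only: norm_scaleR abs_of_nonneg)
  finally show ?thesis .
qed

lemma sg_apply_norm: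
  assumes "holo_contraction_sg S D A" "0 \<le> s"
  shows "norm (blinfun_apply (S s) x) \<le> norm x"
proof -
  have "norm (blinfun_apply (S s) x) \<le> norm (S s) * norm x" by (rule norm_blinfun)
  also have "\<dots> \<le> norm x" using sg_props(4)[OF assms] by (simp add: mult_left_le_one_le)
  finally show ?thesis .
qed

locale split_setup =
  fixes S1 :: "real \<Rightarrow> 'a::banach \<Rightarrow>\<^sub>L 'a" and D1 A1
    and S2 :: "real \<Rightarrow> 'b::banach \<Rightarrow>\<^sub>L 'b" and D2 A2
    and B1 :: "'b \<Rightarrow>\<^sub>L 'a" and B2 :: "'a \<Rightarrow>\<^sub>L 'b" and \<tau> :: real
  assumes H1: "holo_contraction_sg S1 D1 A1" and H2: "holo_contraction_sg S2 D2 A2"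
    and tpos: "\<tau> > 0"
begin

definition "Es s w = (blinfun_apply (S1 s) (fst w), blinfun_apply (S2 s) (snd w))"
definition "U w = (blinfun_apply (S1 \<tau>) (fst w) + Xop S1 B1 \<tau> (snd w), snd w)"
definition "R w = (Xop S1 B1 \<tau> (snd w), Xop S2 B2 \<tau> (fst (U w)))"
abbreviation "T \<equiv> splitT S1 S2 B1 B2 \<tau>"
abbreviation "\<beta> \<equiv> norm B1 + norm B2"

lemma X1_norm: "norm (Xop S1 B1 \<tau> y) \<le> \<tau> * norm B1 * norm y"
proof -
  have "norm (Xop S1 B1 \<tau> y) \<le> \<tau> * norm (blinfun_apply B1 y)"
    unfolding Xop_def by (rule sg_int_norm[OF H1]) (use tpos in simp)
  also have "\<dots> \<le> \<tau> * (norm B1 * norm y)" using tpos by (intro mult_left_mono norm_blinfun) auto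
  finally show ?thesis by (simp add: mult.assoc)
qed

lemma X2_norm: "norm (Xop S2 B2 \<tau> y) \<le> \<tau> * norm B2 * norm y"
proof -
  have "norm (Xop S2 B2 \<tau> y) \<le> \<tau> * norm (blinfun_apply B2 y)"
    unfolding Xop_def by (rule sg_int_norm[OF H2]) (use tpos in simp)
  also have "\<dots> \<le> \<tau> * (norm B2 * norm y)" using tpos by (intro mult_left_mono norm_blinfun) auto
  finally show ?thesis by (simp add: mult.assoc)
qed

lemma X2_add: "Xop S2 B2 \<tau> a + Xop S2 B2 \<tau> b = Xop S2 B2 \<tau> (a + b)"
  unfolding Xop_def using sg_int_add[OF H2, of \<tau>] tpos by (simp add: blinfun.add_right)

lemma X1_dom: "Xop S1 B1 \<tau> y \<in> D1 \<and> norm (A1 (Xop S1 B1 \<tau> y)) \<le> 2 * norm B1 * norm y"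
proof -
  have h: "Xop S1 B1 \<tau> y \<in> D1 \<and> A1 (Xop S1 B1 \<tau> y) = blinfun_apply B1 y - blinfun_apply (S1 \<tau>) (blinfun_apply B1 y)"
    unfolding Xop_def by (rule sg_int[OF H1]) (use tpos in simp)
  have "norm (blinfun_apply B1 y - blinfun_apply (S1 \<tau>) (blinfun_apply B1 y)) \<le> norm (blinfun_apply B1 y) + norm (blinfun_apply (S1 \<tau>) (blinfun_apply B1 y))"
    by (rule norm_triangle_ineq4)
  also have "\<dots> \<le> 2 * norm (blinfun_apply B1 y)" using sg_apply_norm[OF H1, of \<tau>] tpos by simp
  also have "\<dots> \<le> 2 * (norm B1 * norm y)" by (intro mult_left_mono norm_blinfun) auto
  finally show ?thesis using h by simp
qed

lemma X2_dom: "Xop S2 B2 \<tau> y \<in> D2 \<and> norm (A2 (Xop S2 B2 \<tau> y)) \<le> 2 * norm B2 * norm y"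
proof -
  have h: "Xop S2 B2 \<tau> y \<in> D2 \<and> A2 (Xop S2 B2 \<tau> y) = blinfun_apply B2 y - blinfun_apply (S2 \<tau>) (blinfun_apply B2 y)"
    unfolding Xop_def by (rule sg_int[OF H2]) (use tpos in simp)
  have "norm (blinfun_apply B2 y - blinfun_apply (S2 \<tau>) (blinfun_apply B2 y)) \<le> norm (blinfun_apply B2 y) + norm (blinfun_apply (S2 \<tau>) (blinfun_apply B2 y))"
    by (rule norm_triangle_ineq4)
  also have "\<dots> \<le> 2 * norm (blinfun_apply B2 y)" using sg_apply_norm[OF H2, of \<tau>] tpos by simp
  also have "\<dots> \<le> 2 * (norm B2 * norm y)" by (intro mult_left_mono norm_blinfun) auto
  finally show ?thesis using h by simp
qed

lemma Es_0: "Es 0 w = w"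
  unfolding Es_def using sg_props(1)[OF H1] sg_props(1)[OF H2] by simp

lemma Es_comp: "0 \<le> s \<Longrightarrow> 0 \<le> r \<Longrightarrow> Es s (Es r w) = Es (s + r) w"
  unfolding Es_def using sg_props(2)[OF H1, of s r] sg_props(2)[OF H2, of s r] by simp

lemma Es_add: "Es s (a + b) = Es s a + Es s b"
  unfolding Es_def by (simp add: blinfun.add_right)

lemma Es_sum: "Es s (\<Sum>j\<in>J. f j) = (\<Sum>j\<in>J. Es s (f j))"
proof (induction J rule: infinite_finite_induct)
  case (infinite A) then show ?case by (simp add: Es_def zero_prod_def)
next
  case empty then show ?case by (simp add: Es_def zero_prod_def)
next
  case (insert x F) then show ?case by (simp add: Es_add)
qed

lemma Es_norm: "0 \<le> s \<Longrightarrow> norm (Es s w) \<le> norm w"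
  unfolding Es_def using sg_apply_norm[OF H1, of s] sg_apply_norm[OF H2, of s]
  by (metis pair_le prod.collapse)

lemma Es_dom:
  assumes "0 < s"
    and M1: "\<forall>t>0. \<forall>x. norm (t *\<^sub>R A1 (blinfun_apply (S1 t) x)) \<le> M * norm x"
    and M2: "\<forall>t>0. \<forall>y. norm (t *\<^sub>R A2 (blinfun_apply (S2 t) y)) \<le> M * norm y"
    and "0 \<le> M"
  shows "Es s w \<in> D1 \<times> D2 \<and> norm (diagA A1 A2 (Es s w)) \<le> M / s * norm w"
proof -
  have "norm (A1 (blinfun_apply (S1 s) x)) \<le> M / s * norm x" for x
    using M1 assms(1) by (auto simp: field_simps)
  moreover have "norm (A2 (blinfun_apply (S2 s) y)) \<le> M / s * norm y" for y
    using M2 assms(1) by (auto simp: field_simps)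
  ultimately have "norm (diagA A1 A2 (Es s w)) \<le> M / s * norm (fst w, snd w)"
    unfolding Es_def diagA_def using assms by (intro pair_scale) auto
  moreover have "Es s w \<in> D1 \<times> D2" unfolding Es_def using sg_props(7)[OF H1] sg_props(7)[OF H2] assms(1) by auto
  ultimately show ?thesis by simp
qed

lemma T_eq: "T w = Es \<tau> w + R w"
  unfolding splitT_def Es_def R_def U_def Let_def using X2_add by (simp add: algebra_simps)

lemma U_norm: "norm (U w) \<le> (1 + \<tau> * norm B1) * norm w"
proof -
  have "U w = (blinfun_apply (S1 \<tau>) (fst w), snd w) + (Xop S1 B1 \<tau> (snd w), 0)" unfolding U_def by simp
  then have "norm (U w) \<le> norm (blinfun_apply (S1 \<tau>) (fst w), snd w) + norm (Xop S1 B1 \<tau> (snd w), 0::'b)"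
    by (metis norm_triangle_ineq)
  also have "\<dots> \<le> norm w + \<tau> * norm B1 * norm w"
  proof (rule add_mono)
    show "norm (blinfun_apply (S1 \<tau>) (fst w), snd w) \<le> norm w"
      using pair_le[of "blinfun_apply (S1 \<tau>) (fst w)" "fst w" "snd w" "snd w"] sg_apply_norm[OF H1, of \<tau>] tpos by simp
    have "norm (Xop S1 B1 \<tau> (snd w), 0::'b) = norm (Xop S1 B1 \<tau> (snd w))" by (simp add: norm_Pair)
    also have "\<dots> \<le> \<tau> * norm B1 * norm (snd w)" by (rule X1_norm)
    also have "\<dots> \<le> \<tau> * norm B1 * norm w" using tpos by (intro mult_left_mono) (auto, metis norm_snd_le prod.collapse)
    finally show "norm (Xop S1 B1 \<tau> (snd w), 0::'b) \<le> \<tau> * norm B1 * norm w" .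
  qed
  finally show ?thesis by (simp add: algebra_simps)
qed

lemma T_norm: "norm (T w) \<le> exp (\<tau> * \<beta>) * norm w"
proof -
  have Tw: "T w = (fst (U w), blinfun_apply (S2 \<tau>) (snd (U w))) + (0, Xop S2 B2 \<tau> (fst (U w)))"
    unfolding splitT_def U_def Let_def using X2_add by (simp add: algebra_simps)
  have "norm (T w) \<le> norm (fst (U w), blinfun_apply (S2 \<tau>) (snd (U w))) + norm (0::'a, Xop S2 B2 \<tau> (fst (U w)))"
    unfolding Tw by (rule norm_triangle_ineq)
  also have "\<dots> \<le> norm (U w) + \<tau> * norm B2 * norm (U w)"
  proof (rule add_mono)
    show "norm (fst (U w), blinfun_apply (S2 \<tau>) (snd (U w))) \<le> norm (U w)"
      using pair_le[of "fst (U w)" "fst (U w)" "blinfun_apply (S2 \<tau>) (snd (U w))" "snd (U w)"] sg_apply_norm[OF H2, of \<tau>] tpos by simp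
    have "norm (0::'a, Xop S2 B2 \<tau> (fst (U w))) = norm (Xop S2 B2 \<tau> (fst (U w)))" by (simp add: norm_Pair)
    also have "\<dots> \<le> \<tau> * norm B2 * norm (fst (U w))" by (rule X2_norm)
    also have "\<dots> \<le> \<tau> * norm B2 * norm (U w)" using tpos
      by (intro mult_left_mono) (auto, metis norm_fst_le prod.collapse)
    finally show "norm (0::'a, Xop S2 B2 \<tau> (fst (U w))) \<le> \<tau> * norm B2 * norm (U w)" .
  qed
  also have "\<dots> = (1 + \<tau> * norm B2) * norm (U w)" by (simp add: algebra_simps)
  also have "\<dots> \<le> (1 + \<tau> * norm B2) * ((1 + \<tau> * norm B1) * norm w)"
    using U_norm tpos by (intro mult_left_mono) auto
  also have "\<dots> = ((1 + \<tau> * norm B2) * (1 + \<tau> * norm B1)) * norm w" by simp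
  also have "\<dots> \<le> (exp (\<tau> * norm B2) * exp (\<tau> * norm B1)) * norm w"
    using tpos by (intro mult_right_mono mult_mono) (auto intro: add_nonneg_nonneg)
  also have "\<dots> = exp (\<tau> * \<beta>) * norm w" by (simp add: exp_add[symmetric] algebra_simps)
  finally show ?thesis .
qed

lemma beta_aux:
  assumes "0 \<le> a"
  shows "norm B1 * a + norm B2 * ((1 + \<tau> * norm B1) * a) \<le> \<beta> * exp (\<tau> * \<beta>) * a"
proof -
  have e1: "1 + \<tau> * norm B1 \<le> exp (\<tau> * \<beta>)"
  proof -
    have "1 + \<tau> * norm B1 \<le> exp (\<tau> * norm B1)" by simp
    also have "\<dots> \<le> exp (\<tau> * \<beta>)" using tpos by simp
    finally show ?thesis .
  qed
  have e2: "1 \<le> exp (\<tau> * \<beta>)" using tpos by simp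
  have "norm B1 * a \<le> norm B1 * (exp (\<tau> * \<beta>) * a)"
    using e2 assms by (intro mult_left_mono) (auto simp: mult_le_cancel_right1)
  moreover have "norm B2 * ((1 + \<tau> * norm B1) * a) \<le> norm B2 * (exp (\<tau> * \<beta>) * a)"
    using e1 assms by (intro mult_left_mono mult_right_mono) auto
  ultimately show ?thesis by (simp add: algebra_simps)
qed

lemma R_norm: "norm (R w) \<le> \<tau> * (\<beta> * exp (\<tau> * \<beta>) * norm w)"
proof -
  have "norm (R w) \<le> norm (Xop S1 B1 \<tau> (snd w)) + norm (Xop S2 B2 \<tau> (fst (U w)))"
    unfolding R_def by (rule norm_Pair_le)
  also have "\<dots> \<le> \<tau> * norm B1 * norm w + \<tau> * norm B2 * ((1 + \<tau> * norm B1) * norm w)"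
  proof (rule add_mono)
    have "norm (snd w) \<le> norm w" by (metis norm_snd_le prod.collapse)
    then show "norm (Xop S1 B1 \<tau> (snd w)) \<le> \<tau> * norm B1 * norm w"
      using X1_norm[of "snd w"] tpos by (meson mult_left_mono order_trans mult_nonneg_nonneg norm_ge_zero less_imp_le)
    have "norm (fst (U w)) \<le> (1 + \<tau> * norm B1) * norm w" using U_norm[of w]
      by (metis norm_fst_le prod.collapse order_trans)
    then show "norm (Xop S2 B2 \<tau> (fst (U w))) \<le> \<tau> * norm B2 * ((1 + \<tau> * norm B1) * norm w)"
      using X2_norm[of "fst (U w)"] tpos by (meson mult_left_mono order_trans mult_nonneg_nonneg norm_ge_zero less_imp_le)
  qed
  also have "\<dots> = \<tau> * (norm B1 * norm w + norm B2 * ((1 + \<tau> * norm B1) * norm w))" by (simp add: algebra_simps)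
  also have "\<dots> \<le> \<tau> * (\<beta> * exp (\<tau> * \<beta>) * norm w)"
    using beta_aux[of "norm w"] tpos by (intro mult_left_mono) auto
  finally show ?thesis .
qed

lemma R_dom: "R w \<in> D1 \<times> D2 \<and> norm (diagA A1 A2 (R w)) \<le> 2 * (\<beta> * exp (\<tau> * \<beta>) * norm w)"
proof -
  have "norm (diagA A1 A2 (R w)) \<le> norm (A1 (Xop S1 B1 \<tau> (snd w))) + norm (A2 (Xop S2 B2 \<tau> (fst (U w))))"
    unfolding R_def diagA_def by (simp add: norm_Pair_le)
  also have "\<dots> \<le> 2 * norm B1 * norm w + 2 * norm B2 * ((1 + \<tau> * norm B1) * norm w)"
  proof (rule add_mono)
    have "norm (snd w) \<le> norm w" by (metis norm_snd_le prod.collapse)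
    then show "norm (A1 (Xop S1 B1 \<tau> (snd w))) \<le> 2 * norm B1 * norm w"
      using X1_dom[of "snd w"] by (meson mult_left_mono order_trans mult_nonneg_nonneg norm_ge_zero zero_le_numeral)
    have "norm (fst (U w)) \<le> (1 + \<tau> * norm B1) * norm w" using U_norm[of w]
      by (metis norm_fst_le prod.collapse order_trans)
    then show "norm (A2 (Xop S2 B2 \<tau> (fst (U w)))) \<le> 2 * norm B2 * ((1 + \<tau> * norm B1) * norm w)"
      using X2_dom[of "fst (U w)"] by (meson mult_left_mono order_trans mult_nonneg_nonneg norm_ge_zero zero_le_numeral)
  qed
  also have "\<dots> = 2 * (norm B1 * norm w + norm B2 * ((1 + \<tau> * norm B1) * norm w))" by (simp add: algebra_simps)
  also have "\<dots> \<le> 2 * (\<beta> * exp (\<tau> * \<beta>) * norm w)"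
    using beta_aux[of "norm w"] by (intro mult_left_mono) auto
  finally show ?thesis unfolding R_def using X1_dom X2_dom by auto
qed

lemma T_pow_norm: "norm ((T ^^ j) z) \<le> exp (real j * \<tau> * \<beta>) * norm z"
proof (induction j)
  case 0 then show ?case by simp
next
  case (Suc j)
  have "norm ((T ^^ Suc j) z) = norm (T ((T ^^ j) z))" by simp
  also have "\<dots> \<le> exp (\<tau> * \<beta>) * norm ((T ^^ j) z)" by (rule T_norm)
  also have "\<dots> \<le> exp (\<tau> * \<beta>) * (exp (real j * \<tau> * \<beta>) * norm z)"
    using Suc by (intro mult_left_mono) auto
  also have "\<dots> = exp (real (Suc j) * \<tau> * \<beta>) * norm z"
  proof -
    have "exp (\<tau> * \<beta>) * exp (real j * \<tau> * \<beta>) = exp (real (Suc j) * \<tau> * \<beta>)"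
      by (simp add: exp_add[symmetric] distrib_right)
    then show ?thesis by (metis mult.assoc)
  qed
  finally show ?case .
qed

lemma tele: "(T ^^ k) z = Es (real k * \<tau>) z + (\<Sum>j<k. Es (real (k - Suc j) * \<tau>) (R ((T ^^ j) z)))"
proof (induction k)
  case 0 then show ?case by (simp add: Es_0)
next
  case (Suc k)
  have "(T ^^ Suc k) z = T ((T ^^ k) z)" by simp
  also have "\<dots> = Es \<tau> ((T ^^ k) z) + R ((T ^^ k) z)" by (rule T_eq)
  also have "Es \<tau> ((T ^^ k) z) = Es (real (Suc k) * \<tau>) z + (\<Sum>j<k. Es (real (Suc k - Suc j) * \<tau>) (R ((T ^^ j) z)))"
  proof -
    have "Es \<tau> ((T ^^ k) z) = Es \<tau> (Es (real k * \<tau>) z) + (\<Sum>j<k. Es \<tau> (Es (real (k - Suc j) * \<tau>) (R ((T ^^ j) z))))"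
      by (subst Suc, simp add: Es_add Es_sum)
    also have "Es \<tau> (Es (real k * \<tau>) z) = Es (real (Suc k) * \<tau>) z"
      using tpos by (simp add: Es_comp algebra_simps)
    also have "(\<Sum>j<k. Es \<tau> (Es (real (k - Suc j) * \<tau>) (R ((T ^^ j) z)))) = (\<Sum>j<k. Es (real (Suc k - Suc j) * \<tau>) (R ((T ^^ j) z)))"
    proof (rule sum.cong)
      fix j assume "j \<in> {..<k}"
      then have eq: "real (Suc k - Suc j) = 1 + real (k - Suc j)" by (simp add: of_nat_diff)
      have e2: "real (Suc k - Suc j) * \<tau> = \<tau> + real (k - Suc j) * \<tau>"
        by (simp only: eq distrib_right mult_1)
      show "Es \<tau> (Es (real (k - Suc j) * \<tau>) (R ((T ^^ j) z))) = Es (real (Suc k - Suc j) * \<tau>) (R ((T ^^ j) z))"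
        unfolding e2 using tpos by (intro Es_comp) auto
    qed simp
    finally show ?thesis .
  qed
  finally show ?case by (simp only: sum.lessThan_Suc diff_Suc_Suc diff_self_eq_0 of_nat_0 mult_zero_left Es_0 add.assoc)
qed

lemma dA_add:
  assumes "v \<in> D1 \<times> D2" "w \<in> D1 \<times> D2"
  shows "v + w \<in> D1 \<times> D2 \<and> diagA A1 A2 (v + w) = diagA A1 A2 v + diagA A1 A2 w"
  using sg_add[OF H1, of "fst v" "fst w"] sg_add[OF H2, of "snd v" "snd w"] assms
  by (auto simp: diagA_def mem_Times_iff)

lemma dA_sum:
  assumes "finite J" "\<And>j. j \<in> J \<Longrightarrow> f j \<in> D1 \<times> D2"
  shows "sum f J \<in> D1 \<times> D2 \<and> diagA A1 A2 (sum f J) = (\<Sum>j\<in>J. diagA A1 A2 (f j))"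
  using assms
proof (induction J rule: finite_induct)
  case empty
  then show ?case using sg_zero[OF H1] sg_zero[OF H2] by (simp add: diagA_def zero_prod_def)
next
  case (insert a F)
  then show ?case using dA_add[of "f a" "sum f F"] by simp
qed

lemma term_bound:
  assumes jk: "j < k" and kt: "real k * \<tau> \<le> t" and M0: "0 \<le> M"
    and M1: "\<forall>t>0. \<forall>x. norm (t *\<^sub>R A1 (blinfun_apply (S1 t) x)) \<le> M * norm x"
    and M2: "\<forall>t>0. \<forall>y. norm (t *\<^sub>R A2 (blinfun_apply (S2 t) y)) \<le> M * norm y"
  shows "Es (real (k - Suc j) * \<tau>) (R ((T ^^ j) z)) \<in> D1 \<times> D2 \<and>
    norm (diagA A1 A2 (Es (real (k - Suc j) * \<tau>) (R ((T ^^ j) z)))) \<le> 2 * (\<beta> + M * \<beta>) * exp (t * \<beta>) * norm z / real (k - j)"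
proof -
  define q where "q = norm ((T ^^ j) z)"
  define Z where "Z = exp (t * \<beta>) * norm z"
  have b0: "0 \<le> \<beta>" by simp
  have Z0: "0 \<le> Z" unfolding Z_def by simp
  have G: "exp (\<tau> * \<beta>) * q \<le> Z"
  proof -
    have "exp (\<tau> * \<beta>) * q \<le> exp (\<tau> * \<beta>) * (exp (real j * \<tau> * \<beta>) * norm z)"
      unfolding q_def using T_pow_norm[of j z] by (intro mult_left_mono) auto
    also have "\<dots> = exp (real (Suc j) * \<tau> * \<beta>) * norm z"
    proof -
      have "exp (\<tau> * \<beta>) * exp (real j * \<tau> * \<beta>) = exp (real (Suc j) * \<tau> * \<beta>)"
        by (simp add: exp_add[symmetric] distrib_right)
      then show ?thesis by (metis mult.assoc)
    qed
    also have "\<dots> \<le> Z" unfolding Z_def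
    proof (intro mult_right_mono)
      have "real (Suc j) * \<tau> \<le> real k * \<tau>" using jk tpos by (intro mult_right_mono) auto
      then have "real (Suc j) * \<tau> \<le> t" using kt by linarith
      then have "real (Suc j) * \<tau> * \<beta> \<le> t * \<beta>" using b0 by (intro mult_right_mono)
      then show "exp (real (Suc j) * \<tau> * \<beta>) \<le> exp (t * \<beta>)" by simp
    qed simp
    finally show ?thesis .
  qed
  have q0: "0 \<le> q" unfolding q_def by simp
  show ?thesis
  proof (cases "k - Suc j = 0")
    case True
    then have kj: "real (k - j) = 1" using jk by simp
    have "norm (diagA A1 A2 (R ((T ^^ j) z))) \<le> 2 * (\<beta> * exp (\<tau> * \<beta>) * q)"
      using R_dom unfolding q_def by blast
    also have "\<dots> = 2 * \<beta> * (exp (\<tau> * \<beta>) * q)" by simp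
    also have "\<dots> \<le> 2 * \<beta> * Z" using G by (intro mult_left_mono) auto
    also have "\<dots> \<le> 2 * (\<beta> + M * \<beta>) * Z" using M0 Z0 by (intro mult_right_mono) auto
    finally show ?thesis using True R_dom kj unfolding Z_def by (simp add: Es_0 mult.assoc)
  next
    case False
    define m where "m = k - Suc j"
    have m1: "1 \<le> real m" using False unfolding m_def by simp
    have s0: "0 < real m * \<tau>" using m1 tpos by simp
    have km: "real (k - j) = real m + 1" unfolding m_def using jk by simp
    have ED: "Es (real m * \<tau>) (R ((T ^^ j) z)) \<in> D1 \<times> D2 \<and> norm (diagA A1 A2 (Es (real m * \<tau>) (R ((T ^^ j) z)))) \<le> M / (real m * \<tau>) * norm (R ((T ^^ j) z))"
      by (rule Es_dom[OF s0 M1 M2 M0])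
    have "M / (real m * \<tau>) * norm (R ((T ^^ j) z)) \<le> M / (real m * \<tau>) * (\<tau> * (\<beta> * exp (\<tau> * \<beta>) * q))"
      using R_norm unfolding q_def using M0 s0 by (intro mult_left_mono) auto
    also have "\<dots> = M * \<beta> * (exp (\<tau> * \<beta>) * q) / real m" using tpos m1 by (simp add: field_simps)
    also have "\<dots> \<le> M * \<beta> * Z / real m" using G M0 m1 by (intro divide_right_mono mult_left_mono) auto
    also have "\<dots> \<le> 2 * (M * \<beta>) * Z / (real m + 1)"
    proof -
      have X0: "0 \<le> M * \<beta> * Z" using M0 Z0 by simp
      have "1 / real m \<le> 2 / (real m + 1)" using m1 by (simp add: field_simps)
      from mult_left_mono[OF this X0] show ?thesis by (simp add: mult_ac)
    qed
    also have "\<dots> \<le> 2 * (\<beta> + M * \<beta>) * Z / (real m + 1)"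
      using M0 Z0 m1 by (intro divide_right_mono mult_right_mono) auto
    finally show ?thesis using ED km unfolding m_def Z_def by (simp add: mult.assoc)
  qed
qed

end



lemma harm_bound: "1 \<le> k \<Longrightarrow> (\<Sum>j<k. 1 / real (k - j)) \<le> 1 + ln (real k)"
proof -
  assume k: "1 \<le> k"
  have "(\<Sum>j<k. 1 / real (k - j)) = (\<Sum>j<k. (\<lambda>i. inverse (real (Suc i))) (k - Suc j))"
    by (intro sum.cong) (auto simp: Suc_diff_Suc divide_inverse)
  also have "\<dots> = (\<Sum>i<k. inverse (real (Suc i)))" by (rule sum.nat_diff_reindex)
  also have "\<dots> = harm k" by (simp add: harm_altdef)
  also have "\<dots> \<le> 1 + ln (real k)"
    using euler_mascheroni_sequence_decreasing[of 1 k] k by (simp add: harm_def)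
  finally show ?thesis .
qed

theorem lemma4p1:
  fixes \<beta>1 \<beta>2 :: real and M_A :: real
  assumes "M_A > 0"
  shows "\<exists>C1>0. \<forall>(S1 :: real \<Rightarrow> 'a::banach \<Rightarrow>\<^sub>L 'a) (D1 :: 'a set) (A1 :: 'a \<Rightarrow> 'a)
                  (S2 :: real \<Rightarrow> 'b::banach \<Rightarrow>\<^sub>L 'b) (D2 :: 'b set) (A2 :: 'b \<Rightarrow> 'b)
                  (B1 :: 'b \<Rightarrow>\<^sub>L 'a) (B2 :: 'a \<Rightarrow>\<^sub>L 'b).
     holo_contraction_sg S1 D1 A1 \<longrightarrow> holo_contraction_sg S2 D2 A2 \<longrightarrow>
     norm B1 = \<beta>1 \<longrightarrow> norm B2 = \<beta>2 \<longrightarrow>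
     (\<forall>t>0. \<forall>x. norm (t *\<^sub>R A1 (blinfun_apply (S1 t) x)) \<le> M_A * norm x) \<longrightarrow>
     (\<forall>t>0. \<forall>y. norm (t *\<^sub>R A2 (blinfun_apply (S2 t) y)) \<le> M_A * norm y) \<longrightarrow>
     (\<forall>t>0. \<forall>n::nat. \<forall>k\<in>{1..n}. \<forall>z.
        let \<tau> = t / real n; w = (splitT S1 S2 B1 B2 \<tau> ^^ k) z in
        w \<in> D1 \<times> D2 \<and>
        norm (diagA A1 A2 w) \<le>
          (C1 * exp (t * (norm B1 + norm B2)) * (1 + ln (real k)) + M_A / (real k * \<tau>)) * norm z)"
proof -
  define C1 where "C1 = 2 * ((\<bar>\<beta>1\<bar> + \<bar>\<beta>2\<bar>) + M_A * (\<bar>\<beta>1\<bar> + \<bar>\<beta>2\<bar>)) + 1"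
  have C1pos: "C1 > 0"
  proof -
    have "0 \<le> M_A * (\<bar>\<beta>1\<bar> + \<bar>\<beta>2\<bar>)" using assms by simp
    moreover have "0 \<le> \<bar>\<beta>1\<bar> + \<bar>\<beta>2\<bar>" by simp
    ultimately have "0 \<le> (\<bar>\<beta>1\<bar> + \<bar>\<beta>2\<bar>) + M_A * (\<bar>\<beta>1\<bar> + \<bar>\<beta>2\<bar>)" by (rule add_nonneg_nonneg[rotated])
    then show ?thesis unfolding C1_def by (simp add: add_nonneg_pos)
  qed
  show ?thesis
  proof (intro exI[of _ C1] conjI C1pos allI impI ballI)
    fix S1 :: "real \<Rightarrow> 'a::banach \<Rightarrow>\<^sub>L 'a" and D1 A1
      and S2 :: "real \<Rightarrow> 'b::banach \<Rightarrow>\<^sub>L 'b" and D2 A2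
      and B1 :: "'b \<Rightarrow>\<^sub>L 'a" and B2 :: "'a \<Rightarrow>\<^sub>L 'b" and t :: real and n k :: nat and z :: "'a \<times> 'b"
    assume H1: "holo_contraction_sg S1 D1 A1" and H2: "holo_contraction_sg S2 D2 A2"
      and nb1: "norm B1 = \<beta>1" and nb2: "norm B2 = \<beta>2"
      and M1: "\<forall>t>0. \<forall>x. norm (t *\<^sub>R A1 (blinfun_apply (S1 t) x)) \<le> M_A * norm x"
      and M2: "\<forall>t>0. \<forall>y. norm (t *\<^sub>R A2 (blinfun_apply (S2 t) y)) \<le> M_A * norm y"
      and t0: "0 < t" and k: "k \<in> {1..n}"
    define \<tau> where "\<tau> = t / real n"
    have n1: "1 \<le> n" and k1: "1 \<le> k" and kn: "k \<le> n" using k by auto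
    have tpos: "0 < \<tau>" unfolding \<tau>_def using t0 n1 by simp
    interpret split_setup S1 D1 A1 S2 D2 A2 B1 B2 \<tau>
      by unfold_locales (fact H1, fact H2, fact tpos)
    have kt: "real k * \<tau> \<le> t"
    proof -
      have "real k * \<tau> \<le> real n * \<tau>" using kn tpos by (intro mult_right_mono) auto
      also have "\<dots> = t" unfolding \<tau>_def using n1 by simp
      finally show ?thesis .
    qed
    have M0: "0 \<le> M_A" using assms by simp
    define K where "K = 2 * (\<beta> + M_A * \<beta>) * exp (t * \<beta>) * norm z"
    define v where "v j = Es (real (k - Suc j) * \<tau>) (R ((T ^^ j) z))" for j
    have vb: "v j \<in> D1 \<times> D2 \<and> norm (diagA A1 A2 (v j)) \<le> K * (1 / real (k - j))" if "j \<in> {..<k}" for j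
      using term_bound[of j k t M_A z] that kt M0 M1 M2 unfolding v_def K_def by simp
    have kpos: "0 < real k * \<tau>" using k1 tpos by simp
    have E: "Es (real k * \<tau>) z \<in> D1 \<times> D2 \<and> norm (diagA A1 A2 (Es (real k * \<tau>) z)) \<le> M_A / (real k * \<tau>) * norm z"
      by (rule Es_dom[OF kpos M1 M2 M0])
    have S: "sum v {..<k} \<in> D1 \<times> D2 \<and> diagA A1 A2 (sum v {..<k}) = (\<Sum>j<k. diagA A1 A2 (v j))"
      by (rule dA_sum) (use vb in auto)
    have W: "(T ^^ k) z = Es (real k * \<tau>) z + sum v {..<k}"
      unfolding v_def by (rule tele)
    have WD: "(T ^^ k) z \<in> D1 \<times> D2 \<and> diagA A1 A2 ((T ^^ k) z) = diagA A1 A2 (Es (real k * \<tau>) z) + (\<Sum>j<k. diagA A1 A2 (v j))"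
      unfolding W using dA_add[of "Es (real k * \<tau>) z" "sum v {..<k}"] E S by simp
    have "norm (diagA A1 A2 ((T ^^ k) z)) = norm (diagA A1 A2 (Es (real k * \<tau>) z) + (\<Sum>j<k. diagA A1 A2 (v j)))"
      using WD by simp
    also have "\<dots> \<le> norm (diagA A1 A2 (Es (real k * \<tau>) z)) + norm (\<Sum>j<k. diagA A1 A2 (v j))"
      by (rule norm_triangle_ineq)
    also have "\<dots> \<le> norm (diagA A1 A2 (Es (real k * \<tau>) z)) + (\<Sum>j<k. norm (diagA A1 A2 (v j)))"
      by (intro add_left_mono norm_sum)
    also have "\<dots> \<le> M_A / (real k * \<tau>) * norm z + (\<Sum>j<k. K * (1 / real (k - j)))"
      using E vb by (intro add_mono sum_mono) auto
    also have "(\<Sum>j<k. K * (1 / real (k - j))) = K * (\<Sum>j<k. 1 / real (k - j))" by (simp add: sum_distrib_left)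
    also have "K * (\<Sum>j<k. 1 / real (k - j)) \<le> K * (1 + ln (real k))"
    proof -
      have "0 \<le> \<beta> + M_A * \<beta>" using M0 by simp
      then have "0 \<le> K" unfolding K_def by simp
      then show ?thesis using harm_bound[OF k1] by (intro mult_left_mono)
    qed
    also have "K * (1 + ln (real k)) \<le> C1 * exp (t * \<beta>) * (1 + ln (real k)) * norm z"
    proof -
      have l: "0 \<le> 1 + ln (real k)" using k1 by simp
      have a1: "\<bar>\<beta>1\<bar> = norm B1" "\<bar>\<beta>2\<bar> = norm B2" using nb1 nb2 by auto
      have "2 * (\<beta> + M_A * \<beta>) \<le> C1" unfolding C1_def a1 by simp
      then have "2 * (\<beta> + M_A * \<beta>) * (exp (t * \<beta>) * norm z * (1 + ln (real k))) \<le> C1 * (exp (t * \<beta>) * norm z * (1 + ln (real k)))"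
        using l by (intro mult_right_mono) auto
      then show ?thesis unfolding K_def by (simp add: mult_ac)
    qed
    finally have fin: "norm (diagA A1 A2 ((T ^^ k) z)) \<le> (C1 * exp (t * \<beta>) * (1 + ln (real k)) + M_A / (real k * \<tau>)) * norm z"
      by (simp add: algebra_simps)
    show "let \<tau> = t / real n; w = (splitT S1 S2 B1 B2 \<tau> ^^ k) z in
        w \<in> D1 \<times> D2 \<and>
        norm (diagA A1 A2 w) \<le>
          (C1 * exp (t * (norm B1 + norm B2)) * (1 + ln (real k)) + M_A / (real k * \<tau>)) * norm z"
      unfolding Let_def \<tau>_def[symmetric] using WD fin by simp
  qed
qed

end
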